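(* Let $t\ge 2$ and $s\ge1$ be integers and let $H$ be a $t$-uniform hypergraph on the vertex set $[n]=\{1,\dots,n\}$. Suppose $H$ does not contain a complete $t$-partite hypergraph with parts $V_1,\dots,V_t\subseteq[n]$ such that $|V_i|=s$ for all $i$ and every element of $V_i$ is smaller than every element of $V_j$ whenever $i<j$ (i.e., there are no such sets with every $t$-set $\{v_1,\dots,v_t\}$, $v_i\in V_i$, being an edge of $H$). Then $H$ has at most $2n^{t-\delta}$ edges, where $\delta=\frac{1}{ts^{t-1}}$. *)

theory Defs
  imports Complex_Main
begin

definition uniform_hypergraph :: "nat \<Rightarrow> nat \<Rightarrow> nat set set \<Rightarrow> bool" where
  "uniform_hypergraph t n H \<longleftrightarrow> (\<forall>e\<in>H. e \<subseteq> {1..n} \<and> card e = t)"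

definition contains_ordered_Kt_s :: "nat \<Rightarrow> nat \<Rightarrow> nat \<Rightarrow> nat set set \<Rightarrow> bool" where
  "contains_ordered_Kt_s t s n H \<longleftrightarrow>
     (\<exists>V :: nat \<Rightarrow> nat set.
        (\<forall>i<t. V i \<subseteq> {1..n} \<and> card (V i) = s) \<and>
        (\<forall>i j x y. i < j \<and> j < t \<and> x \<in> V i \<and> y \<in> V j \<longrightarrow> x < y) \<and>
        (\<forall>f :: nat \<Rightarrow> nat. (\<forall>i<t. f i \<in> V i) \<longrightarrow> f ` {..<t} \<in> H))"

end

theory Submission
  imports Defs "HOL-Analysis.Analysis"
begin


lemma convex_power_nonneg: "convex_on {0::real..} (\<lambda>x. x^n)"
proof (intro f''_ge0_imp_convex)
  show "((\<lambda>x. x ^ n) has_real_derivative of_nat n * x^(n-1)) (at x)" for x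
    by (rule derivative_eq_intros | simp)+
  show "((\<lambda>x. of_nat n * x^(n-1)) has_real_derivative of_nat n * of_nat (n-1) * x^(n-2)) (at x)" for x
    by (rule derivative_eq_intros | simp add: eval_nat_numeral)+
  show "\<And>x. x \<in> {0::real..} \<Longrightarrow> 0 \<le> real n * real (n - 1) * x ^ (n - 2)"
    by auto
qed auto

lemma power_mean:
  fixes y :: "'a \<Rightarrow> real"
  assumes "finite A" "\<And>i. i \<in> A \<Longrightarrow> y i \<ge> 0" "s \<ge> 1"
  shows "(\<Sum>i\<in>A. y i)^s \<le> real (card A)^(s-1) * (\<Sum>i\<in>A. y i ^ s)"
proof (cases "A = {}")
  case True then show ?thesis using assms by (simp add: power_0_left)
next
  case False
  define N where "N = real (card A)"
  have N: "N > 0" using False assms by (simp add: N_def card_gt_0_iff)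
  have "(\<Sum>i\<in>A. (1/N) *\<^sub>R y i)^s \<le> (\<Sum>i\<in>A. (1/N) * (y i)^s)"
    using convex_on_sum [OF assms(1) False convex_power_nonneg, where a = "\<lambda>x. 1 / N" and y=y] assms N False
    by (simp add: N_def)
  hence "((\<Sum>i\<in>A. y i) / N)^s \<le> (\<Sum>i\<in>A. (y i)^s) / N"
    by (simp add: sum_divide_distrib[symmetric] sum_distrib_left[symmetric])
  hence "(\<Sum>i\<in>A. y i)^s / N^s \<le> (\<Sum>i\<in>A. (y i)^s) / N"
    by (simp add: power_divide)
  hence "(\<Sum>i\<in>A. y i)^s \<le> (\<Sum>i\<in>A. (y i)^s) / N * N^s"
    using N by (simp add: divide_le_eq)
  also have "N^s = N * N^(s-1)" using assms(3) by (metis One_nat_def Suc_pred' not_one_le_zero neq0_conv power_Suc)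
  finally show ?thesis using N by (simp add: N_def[symmetric] field_simps)
qed

lemma fact_choose_ge:
  assumes "s \<ge> 1"
  shows "(max (real d - real s + 1) 0)^s \<le> fact s * real (d choose s)"
proof (cases "s \<le> d")
  case False
  then have "max (real d - real s + 1) 0 = 0" by simp
  then show ?thesis using assms by (simp add: power_0_left)
next
  case True
  have "fact s * fact (d - s) * (d choose s) = (fact d :: nat)" using binomial_fact_lemma[OF True] .
  also have "fact d = fact (d-s) * \<Prod>{Suc (d-s)..d}" using fact_eq_fact_times[of "d-s" d] by simp
  finally have e: "fact s * (d choose s) = \<Prod>{Suc (d-s)..d}" by (simp add: mult.commute mult.left_commute)
  have "(Suc (d-s))^s = (\<Prod>i\<in>{Suc (d-s)..d}. Suc (d-s))" using True by simp
  also have "\<dots> \<le> \<Prod>{Suc (d-s)..d}" by (rule prod_mono) auto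
  finally have "(Suc (d-s))^s \<le> fact s * (d choose s)" using e by simp
  hence "real ((Suc (d-s))^s) \<le> real (fact s * (d choose s))" by linarith
  moreover have "max (real d - real s + 1) 0 = real (Suc (d-s))" using True by simp
  ultimately show ?thesis by simp
qed



lemma base_case:
  assumes U: "uniform_hypergraph 1 n H" and NC: "\<not> contains_ordered_Kt_s 1 s n H"
  shows "card H \<le> s - 1"
proof (rule ccontr)
  assume "\<not> card H \<le> s - 1"
  hence ge: "card H \<ge> s" by simp
  define W where "W = {x. {x} \<in> H}"
  have "H = (\<lambda>x. {x}) ` W"
  proof
    show "H \<subseteq> (\<lambda>x. {x}) ` W"
    proof
      fix e assume "e \<in> H"
      with U have "card e = 1" by (auto simp: uniform_hypergraph_def)
      then obtain x where "e = {x}" by (auto simp: card_Suc_eq)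
      with \<open>e \<in> H\<close> show "e \<in> (\<lambda>x. {x}) ` W" by (auto simp: W_def)
    qed
  qed (auto simp: W_def)
  hence "card H = card W" by (simp add: card_image)
  hence "card W \<ge> s" using ge by simp
  moreover have "finite W"
  proof -
    have "W \<subseteq> {1..n}" using U by (auto simp: W_def uniform_hypergraph_def)
    thus ?thesis using finite_subset by blast
  qed
  ultimately obtain V where V: "V \<subseteq> W" "card V = s" by (meson obtain_subset_with_card_n)
  have c1: "\<forall>i<(1::nat). V \<subseteq> {1..n} \<and> card V = s" using V U by (auto simp: W_def uniform_hypergraph_def)
  have c3: "\<forall>f. (\<forall>i<(1::nat). f i \<in> V) \<longrightarrow> f ` {..<1} \<in> H"
  proof (intro allI impI)
    fix f :: "nat \<Rightarrow> nat" assume "\<forall>i<(1::nat). f i \<in> V"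
    hence "f 0 \<in> V" by simp
    moreover have "f ` {..<1} = {f 0}" by auto
    ultimately show "f ` {..<1} \<in> H" using V by (auto simp: W_def)
  qed
  have "contains_ordered_Kt_s 1 s n H"
    unfolding contains_ordered_Kt_s_def
    using c1 c3 by (intro exI[of _ "\<lambda>_. V"]) auto
  with NC show False by simp
qed

lemma link_free:
  assumes s1: "s \<ge> 1" and NC: "\<not> contains_ordered_Kt_s (Suc m) s n H"
    and T: "T \<subseteq> {1..n}" "card T = s"
  shows "\<not> contains_ordered_Kt_s m s n
     {S. S \<subseteq> {1..n} \<and> card S = m \<and> (\<forall>v\<in>T. (\<forall>x\<in>S. x < v) \<and> insert v S \<in> H)}"
    (is "\<not> contains_ordered_Kt_s m s n ?G")
proof
  assume "contains_ordered_Kt_s m s n ?G"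
  then obtain V where VV: "(\<forall>i<m. V i \<subseteq> {1..n} \<and> card (V i) = s) \<and>
      (\<forall>i j x y. i < j \<and> j < m \<and> x \<in> V i \<and> y \<in> V j \<longrightarrow> x < y) \<and>
      (\<forall>f. (\<forall>i<m. f i \<in> V i) \<longrightarrow> f ` {..<m} \<in> ?G)"
    unfolding contains_ordered_Kt_s_def by (rule exE)
  note V1 = VV[THEN conjunct1] and V2 = VV[THEN conjunct2, THEN conjunct1]
    and V3 = VV[THEN conjunct2, THEN conjunct2]
  have ne: "\<exists>z. z \<in> V k" if "k < m" for k
  proof -
    have "card (V k) > 0" using V1 that s1 by auto
    thus ?thesis by (metis card_gt_0_iff ex_in_conv)
  qed
  define V' where "V' = V(m := T)"
  have c1: "\<forall>i<Suc m. V' i \<subseteq> {1..n} \<and> card (V' i) = s"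
    using V1 T by (auto simp: V'_def)
  have c2: "x < y" if h: "i < j \<and> j < Suc m \<and> x \<in> V' i \<and> y \<in> V' j" for i j x y
    proof (cases "j = m")
      case False
      have jm: "j < m" using h False by simp
      have im: "i < m" using h jm by simp
      have "x \<in> V i" using h im by (simp add: V'_def)
      moreover have "y \<in> V j" using h jm by (simp add: V'_def)
      ultimately show ?thesis using V2 h jm by blast
    next
      case True
      hence im: "i < m" "x \<in> V i" "y \<in> T" using h by (auto simp: V'_def)
      define f where "f = (\<lambda>k. if k = i then x else (SOME z. z \<in> V k))"
      have "\<forall>k<m. f k \<in> V k"
      proof (intro allI impI)
        fix k assume "k < m"
        show "f k \<in> V k"
        proof (cases "k = i")
          case True then show ?thesis using im by (simp add: f_def)
        next
          case False then show ?thesis using ne[OF \<open>k < m\<close>] by (simp add: f_def) (rule someI_ex)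
        qed
      qed
      hence "f ` {..<m} \<in> ?G" using V3 by blast
      moreover have "x \<in> f ` {..<m}" using im by (auto simp: f_def)
      ultimately have "\<forall>v\<in>T. x < v" by auto
      then show ?thesis using im by blast
    qed
  have c3: "f ` {..<Suc m} \<in> H" if h: "\<forall>i<Suc m. f i \<in> V' i" for f
    proof -
      have "\<forall>i<m. f i \<in> V i"
      proof (intro allI impI)
        fix i assume "i < m"
        then have "i < Suc m" "i \<noteq> m" by auto
        then show "f i \<in> V i" using h[rule_format, of i] by (simp add: V'_def)
      qed
      hence "f ` {..<m} \<in> ?G" using V3 by blast
      moreover have "f m \<in> T" using h by (auto simp: V'_def)
      ultimately have "insert (f m) (f ` {..<m}) \<in> H" by auto
      thus ?thesis by (simp add: lessThan_Suc)
    qed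
  have "contains_ordered_Kt_s (Suc m) s n H"
    unfolding contains_ordered_Kt_s_def
  proof (rule exI[of _ V'], intro conjI)
    show "\<forall>i j x y. i < j \<and> j < Suc m \<and> x \<in> V' i \<and> y \<in> V' j \<longrightarrow> x < y"
      using c2 by blast
    show "\<forall>i<Suc m. V' i \<subseteq> {1..n} \<and> card (V' i) = s" by (rule c1)
    show "\<forall>f. (\<forall>i<Suc m. f i \<in> V' i) \<longrightarrow> f ` {..<Suc m} \<in> H"
      using c3 by blast
  qed
  with NC show False by simp
qed



lemma step:
  fixes m s n :: nat and H :: "nat set set" and F :: real
  assumes s1: "s \<ge> 1" and U: "uniform_hypergraph (Suc m) n H"
    and NC: "\<not> contains_ordered_Kt_s (Suc m) s n H"
    and IH: "\<And>G. uniform_hypergraph m n G \<Longrightarrow> \<not> contains_ordered_Kt_s m s n G \<Longrightarrow> real (card G) \<le> F"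
    and F0: "F \<ge> 0"
  shows "real (card H) \<le> real (s-1) * real n ^ m + (real n ^ (m*(s-1)) * real n ^ s * F) powr (1/real s)"
proof -
  define A where "A = {S. S \<subseteq> {1..n} \<and> card S = m}"
  define L where "L S = {v\<in>{1..n}. (\<forall>x\<in>S. x < v) \<and> insert v S \<in> H}" for S
  define B where "B = {T. T \<subseteq> {1..n} \<and> card T = s}"
  define G where "G T = {S\<in>A. T \<subseteq> L S}" for T
  have finA: "finite A" unfolding A_def by (rule finite_subset[of _ "Pow {1..n}"]) auto
  have finB: "finite B" unfolding B_def by (rule finite_subset[of _ "Pow {1..n}"]) auto
  have finL: "finite (L S)" for S by (simp add: L_def)
  have Lsub: "L S \<subseteq> {1..n}" for S by (auto simp: L_def)
  have cardA: "card A = n choose m" using n_subsets[of "{1..n}" m] by (simp add: A_def)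
  have cardB: "card B = n choose s" using n_subsets[of "{1..n}" s] by (simp add: B_def)
  have cardA_le: "real (card A) \<le> real n ^ m"
  proof (cases "m \<le> n")
    case True
    then have "n choose m \<le> n ^ m" by (rule binomial_le_pow)
    then show ?thesis using cardA by (metis of_nat_le_iff of_nat_power)
  next
    case False then show ?thesis using cardA by (simp add: binomial_eq_0)
  qed
  have factB: "fact s * real (card B) \<le> real n ^ s"
  proof (cases "s \<le> n")
    case True
    have e: "fact s * fact (n - s) * (n choose s) = (fact n :: nat)" using binomial_fact_lemma[OF True] .
    have "fact s * (n choose s) = fact n div fact (n - s)"
      using e by (metis div_mult_self1_is_m fact_gt_zero mult.commute mult.left_commute)
    also have "\<dots> \<le> n ^ s" by (rule fact_div_fact_le_pow[OF True])
    finally have "real (fact s * (n choose s)) \<le> real (n ^ s)" by (simp only: of_nat_le_iff)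
    then show ?thesis using cardB by simp
  next
    case False then show ?thesis using cardB by (simp add: binomial_eq_0)
  qed
  have bij: "bij_betw (\<lambda>(S,v). insert v S) (Sigma A L) H"
    unfolding bij_betw_def
  proof
    show "inj_on (\<lambda>(S,v). insert v S) (Sigma A L)"
    proof (rule inj_onI, clarify)
      fix S v S' v'
      assume h: "S \<in> A" "v \<in> L S" "S' \<in> A" "v' \<in> L S'" "insert v S = insert v' S'"
      have lt1: "\<forall>x\<in>S. x < v" and lt2: "\<forall>x\<in>S'. x < v'" using h by (auto simp: L_def)
      have vv: "v = v'"
      proof (rule ccontr)
        assume ne: "v \<noteq> v'"
        have "v' \<in> S" using h(5) ne by (metis insertCI insertE)
        moreover have "v \<in> S'" using h(5) ne by (metis insertCI insertE)
        ultimately show False using lt1 lt2 by force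
      qed
      have "v \<notin> S" using lt1 by auto
      moreover have "v' \<notin> S'" using lt2 by auto
      ultimately have "S = S'" using h(5) vv by (metis Diff_insert_absorb)
      then show "S = S' \<and> v = v'" using vv by simp
    qed
    show "(\<lambda>(S,v). insert v S) ` Sigma A L = H"
    proof
      show "(\<lambda>(S,v). insert v S) ` Sigma A L \<subseteq> H" by (auto simp: L_def)
      show "H \<subseteq> (\<lambda>(S,v). insert v S) ` Sigma A L"
      proof
        fix e assume e: "e \<in> H"
        then have eU: "e \<subseteq> {1..n}" "card e = Suc m" using U unfolding uniform_hypergraph_def by blast+
        have fe: "finite e" using eU(2) by (metis card.infinite nat.distinct(1))
        have ne: "e \<noteq> {}" using eU(2) by auto
        define v where "v = Max e"
        have ve: "v \<in> e" using fe ne by (simp add: v_def)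
        have lt: "\<forall>x\<in>e - {v}. x < v" using fe by (auto simp: v_def order_le_neq_trans)
        have cd: "card (e - {v}) = m" using eU(2) ve fe by (simp add: card_Diff_singleton)
        have "e - {v} \<subseteq> {1..n}" using eU(1) by blast
        hence inA: "e - {v} \<in> A" using cd unfolding A_def by blast
        have ins: "insert v (e - {v}) = e" using ve by blast
        have "v \<in> {1..n}" using eU(1) ve by blast
        hence inL: "v \<in> L (e - {v})" using lt ins e unfolding L_def by simp
        have "(e - {v}, v) \<in> Sigma A L" using inA inL by (rule SigmaI)
        moreover have "e = (\<lambda>(S,v). insert v S) (e - {v}, v)" using ins by simp
        ultimately show "e \<in> (\<lambda>(S,v). insert v S) ` Sigma A L" by (rule rev_image_eqI)
      qed
    qed
  qed
  have cardH: "card H = (\<Sum>S\<in>A. card (L S))"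
    using bij_betw_same_card[OF bij] finA finL by simp
  have dc: "(\<Sum>S\<in>A. card (L S) choose s) = (\<Sum>T\<in>B. card (G T))"
  proof -
    have 1: "card (L S) choose s = (\<Sum>T\<in>{T\<in>B. T \<subseteq> L S}. 1)" for S
    proof -
      have "card (L S) choose s = card {T. T \<subseteq> L S \<and> card T = s}"
        using n_subsets[OF finL] by simp
      also have "{T. T \<subseteq> L S \<and> card T = s} = {T\<in>B. T \<subseteq> L S}"
        using Lsub[of S] by (auto simp: B_def)
      finally show ?thesis by simp
    qed
    have 2: "card (G T) = (\<Sum>S\<in>{S\<in>A. T \<subseteq> L S}. 1)" for T
      by (simp add: G_def)
    show ?thesis
      unfolding 1 2 using sum.swap_restrict[OF finA finB, of "\<lambda>_ _. (1::nat)" "\<lambda>S T. T \<subseteq> L S"]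
      by simp
  qed
  have GF: "real (card (G T)) \<le> F" if T: "T \<in> B" for T
  proof -
    have Tn: "T \<subseteq> {1..n}" "card T = s" using T by (auto simp: B_def)
    have eq: "G T = {S. S \<subseteq> {1..n} \<and> card S = m \<and> (\<forall>v\<in>T. (\<forall>x\<in>S. x < v) \<and> insert v S \<in> H)}"
      using Tn by (auto simp: G_def A_def L_def)
    show ?thesis unfolding eq
    proof (rule IH)
      show "uniform_hypergraph m n {S. S \<subseteq> {1..n} \<and> card S = m \<and> (\<forall>v\<in>T. (\<forall>x\<in>S. x < v) \<and> insert v S \<in> H)}"
        by (auto simp: uniform_hypergraph_def)
      show "\<not> contains_ordered_Kt_s m s n {S. S \<subseteq> {1..n} \<and> card S = m \<and> (\<forall>v\<in>T. (\<forall>x\<in>S. x < v) \<and> insert v S \<in> H)}"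
        by (rule link_free[OF s1 NC Tn])
    qed
  qed
  define y where "y S = max (real (card (L S)) - real s + 1) 0" for S
  have y0: "y S \<ge> 0" for S by (simp add: y_def)
  have sumy: "real (card H) - real (s-1) * real (card A) \<le> (\<Sum>S\<in>A. y S)"
  proof -
    have "real (card H) - real (s-1) * real (card A) = (\<Sum>S\<in>A. real (card (L S)) - real s + 1)"
      using s1 by (simp add: cardH sum_subtractf sum.distrib of_nat_diff algebra_simps)
    also have "\<dots> \<le> (\<Sum>S\<in>A. y S)" by (rule sum_mono) (simp add: y_def)
    finally show ?thesis .
  qed
  have sumys: "(\<Sum>S\<in>A. y S ^ s) \<le> real n ^ s * F"
  proof -
    have "(\<Sum>S\<in>A. y S ^ s) \<le> (\<Sum>S\<in>A. fact s * real (card (L S) choose s))"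
      by (rule sum_mono) (simp add: y_def fact_choose_ge[OF s1])
    also have "\<dots> = fact s * real (\<Sum>S\<in>A. card (L S) choose s)"
      by (simp add: sum_distrib_left)
    also have "\<dots> = fact s * (\<Sum>T\<in>B. real (card (G T)))" by (simp add: dc)
    also have "\<dots> \<le> fact s * (\<Sum>T\<in>B. F)"
      by (intro mult_left_mono sum_mono GF) auto
    also have "\<dots> = (fact s * real (card B)) * F" by simp
    also have "\<dots> \<le> real n ^ s * F" by (rule mult_right_mono[OF factB F0])
    finally show ?thesis .
  qed
  show ?thesis
  proof (cases "real (card H) \<le> real (s-1) * real n ^ m")
    case True
    then show ?thesis by (smt (verit) powr_ge_zero)
  next
    case False
    define D where "D = real (card H) - real (s-1) * real n ^ m"
    have D0: "D > 0" using False by (simp add: D_def)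
    have "real (s-1) * real (card A) \<le> real (s-1) * real n ^ m"
      by (rule mult_left_mono[OF cardA_le]) simp
    hence DY: "D \<le> (\<Sum>S\<in>A. y S)" using sumy by (simp add: D_def)
    have "D ^ s \<le> (\<Sum>S\<in>A. y S) ^ s" by (rule power_mono[OF DY]) (use D0 in simp)
    also have "\<dots> \<le> real (card A) ^ (s-1) * (\<Sum>S\<in>A. y S ^ s)"
      by (rule power_mean[OF finA y0 s1])
    also have "\<dots> \<le> (real n ^ m) ^ (s-1) * (real n ^ s * F)"
      by (intro mult_mono power_mono cardA_le sumys) (auto intro: sum_nonneg simp: y0)
    also have "\<dots> = real n ^ (m*(s-1)) * real n ^ s * F" by (simp add: power_mult)
    finally have Ds: "D ^ s \<le> real n ^ (m*(s-1)) * real n ^ s * F" .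
    have "D = (D ^ s) powr (1/real s)"
      using D0 s1 by (simp add: powr_realpow[symmetric] powr_powr)
    also have "\<dots> \<le> (real n ^ (m*(s-1)) * real n ^ s * F) powr (1/real s)"
      by (rule powr_mono2) (use Ds D0 in auto)
    finally show ?thesis by (simp add: D_def)
  qed
qed



lemma fact_choose_le: "fact s * real (n choose s) \<le> real n ^ s"
proof (cases "s \<le> n")
  case True
  have e: "fact s * fact (n - s) * (n choose s) = (fact n :: nat)" using binomial_fact_lemma[OF True] .
  have "fact s * (n choose s) = fact n div fact (n - s)"
    using e by (metis div_mult_self1_is_m fact_gt_zero mult.commute mult.left_commute)
  also have "\<dots> \<le> n ^ s" by (rule fact_div_fact_le_pow[OF True])
  finally have "real (fact s * (n choose s)) \<le> real (n ^ s)" by (simp only: of_nat_le_iff)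
  then show ?thesis by simp
next
  case False then show ?thesis by (simp add: binomial_eq_0)
qed

lemma two_s_le: "2 * s \<le> (2::nat) ^ s" if "s \<ge> 1" for s
  using that
proof (induction s)
  case 0 then show ?case by simp
next
  case (Suc s)
  show ?case
  proof (cases "s = 0")
    case True then show ?thesis by simp
  next
    case False
    then have "2 * s \<le> 2 ^ s" using Suc by simp
    moreover have "(2::nat) ^ 1 \<le> 2 ^ s" using False by (intro power_increasing) auto
    ultimately show ?thesis by simp
  qed
qed

lemma root_2s: assumes "s \<ge> 1" shows "(2 * real s) powr (1 / real s) \<le> 2"
proof -
  have "2 * real s \<le> 2 ^ s" using two_s_le[OF assms] by (metis of_nat_le_iff of_nat_mult of_nat_numeral of_nat_power)
  hence "(2 * real s) powr (1 / real s) \<le> (2 ^ s) powr (1 / real s)"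
    by (intro powr_mono2) auto
  also have "(2::real) ^ s = 2 powr real s" by (simp add: powr_realpow)
  also have "(2 powr real s) powr (1 / real s) = (2::real)" using assms by (simp add: powr_powr)
  finally show ?thesis .
qed

lemma arith_step:
  fixes x F :: real and s k :: nat
  assumes x: "x \<ge> 1" and s1: "s \<ge> 1" and k1: "k \<ge> 1"
  shows "(x ^ (k*(s-1)) * x ^ s * (2 * real s * x powr (real k - 1 / real s ^ (k-1)))) powr (1/real s)
         \<le> 2 * x powr (real k + 1 - 1 / real s ^ k)"
proof -
  have xp: "x > 0" using x by simp
  have p1: "x ^ (k*(s-1)) = x powr real (k*(s-1))" by (rule powr_realpow[OF xp, symmetric])
  have p2: "x ^ s = x powr real s" by (rule powr_realpow[OF xp, symmetric])
  have "x ^ (k*(s-1)) * x ^ s * (2 * real s * x powr (real k - 1 / real s ^ (k-1)))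
      = (2 * real s) * x powr (real (k*(s-1)) + real s + (real k - 1 / real s ^ (k-1)))"
    unfolding p1 p2 by (simp add: powr_add[symmetric] algebra_simps)
  also have "real (k*(s-1)) + real s + (real k - 1 / real s ^ (k-1)) = real s * (real k + 1 - 1 / real s ^ k)"
  proof (cases k)
    case 0 then show ?thesis using k1 by simp
  next
    case (Suc j)
    have "real s ^ Suc j = real s * real s ^ j" by simp
    then show ?thesis using s1 Suc by (simp add: of_nat_diff field_simps)
  qed
  finally have eq: "x ^ (k*(s-1)) * x ^ s * (2 * real s * x powr (real k - 1 / real s ^ (k-1)))
      = (2 * real s) * x powr (real s * (real k + 1 - 1 / real s ^ k))" .
  have "((2 * real s) * x powr (real s * (real k + 1 - 1 / real s ^ k))) powr (1/real s)
      = (2 * real s) powr (1/real s) * x powr (real k + 1 - 1 / real s ^ k)"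
    using s1 xp by (simp add: powr_mult powr_powr)
  also have "\<dots> \<le> 2 * x powr (real k + 1 - 1 / real s ^ k)"
    by (rule mult_right_mono[OF root_2s[OF s1]]) simp
  finally have fin: "((2 * real s) * x powr (real s * (real k + 1 - 1 / real s ^ k))) powr (1/real s)
      \<le> 2 * x powr (real k + 1 - 1 / real s ^ k)" .
  show ?thesis unfolding eq by (rule fin)
qed

lemma levels:
  fixes s n :: nat
  assumes s1: "s \<ge> 1" and n1: "n \<ge> 1"
  shows "m \<ge> 1 \<Longrightarrow> uniform_hypergraph m n G \<Longrightarrow> \<not> contains_ordered_Kt_s m s n G \<Longrightarrow>
     real (card G) \<le> 2 * real s * real n powr (real m - 1 / real s ^ (m-1))"
proof (induction m arbitrary: G)
  case 0 then show ?case by simp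
next
  case (Suc k)
  show ?case
  proof (cases "k = 0")
    case True
    then have "card G \<le> s - 1" using base_case Suc.prems by simp
    then have "real (card G) \<le> 2 * real s" by linarith
    then show ?thesis using True s1 n1 by simp
  next
    case False
    define F where "F = 2 * real s * real n powr (real k - 1 / real s ^ (k-1))"
    have F0: "F \<ge> 0" by (simp add: F_def)
    have IH: "real (card G') \<le> F" if "uniform_hypergraph k n G'" "\<not> contains_ordered_Kt_s k s n G'" for G'
      using Suc.IH[OF _ that] False by (simp add: F_def)
    have "real (card G) \<le> real (s-1) * real n ^ k + (real n ^ (k*(s-1)) * real n ^ s * F) powr (1/real s)"
      by (rule step[OF s1 Suc.prems(2) Suc.prems(3) IH F0])
    also have "\<dots> \<le> real (s-1) * real n ^ k + 2 * real n powr (real k + 1 - 1 / real s ^ k)"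
      using arith_step[of "real n" s k] n1 s1 False by (simp add: F_def)
    also have "real n ^ k \<le> real n powr (real k + 1 - 1 / real s ^ k)"
    proof -
      have "1 / real s ^ k \<le> 1" using s1 by simp
      hence "real n powr real k \<le> real n powr (real k + 1 - 1 / real s ^ k)"
        using n1 by (intro powr_mono) auto
      thus ?thesis using n1 by (simp add: powr_realpow)
    qed
    hence "real (s-1) * real n ^ k \<le> real (s-1) * real n powr (real k + 1 - 1 / real s ^ k)"
      by (rule mult_left_mono) simp
    hence "real (s-1) * real n ^ k + 2 * real n powr (real k + 1 - 1 / real s ^ k)
        \<le> (real (s-1) + 2) * real n powr (real k + 1 - 1 / real s ^ k)" by (simp add: algebra_simps)
    also have "\<dots> \<le> 2 * real s * real n powr (real k + 1 - 1 / real s ^ k)"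
      using s1 by (intro mult_right_mono) auto
    finally show ?thesis by (simp add: algebra_simps)
  qed
qed



theorem lemma2p4:
  fixes t s n :: nat and H :: "nat set set"
  assumes "t \<ge> 2" and "s \<ge> 1"
    and "uniform_hypergraph t n H"
    and "\<not> contains_ordered_Kt_s t s n H"
  shows "real (card H) \<le> 2 * real n powr (real t - 1 / (real t * real s ^ (t - 1)))"
proof -
  note t2 = assms(1) and s1 = assms(2) and U = assms(3) and NC = assms(4)
  obtain k where tk: "t = Suc k" using t2 by (cases t) auto
  have k1: "k \<ge> 1" using t2 tk by simp
  show ?thesis
  proof (cases "n = 0")
    case True
    have "H = {}"
    proof (rule ccontr)
      assume "H \<noteq> {}"
      then obtain e where "e \<in> H" by blast
      then have "e \<subseteq> {1..n}" "card e = t" using U unfolding uniform_hypergraph_def by blast+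
      then show False using True t2 by (simp add: subset_empty)
    qed
    then show ?thesis by simp
  next
    case False
    hence n1: "n \<ge> 1" by simp
    define x where "x = real n"
    have x1: "x \<ge> 1" using n1 by (simp add: x_def)
    have xp: "x > 0" using x1 by simp
    define \<delta> where "\<delta> = 1 / (real t * real s ^ (t - 1))"
    have tk1: "t - 1 = k" using tk by simp
    have spos: "real s ^ k > 0" using s1 by simp
    have dpos: "\<delta> > 0" using s1 t2 by (simp add: \<delta>_def)
    have td: "real t * \<delta> = 1 / real s ^ k" using t2 spos unfolding \<delta>_def tk1 by simp
    define F where "F = 2 * real s * real n powr (real k - 1 / real s ^ (k-1))"
    have F0: "F \<ge> 0" by (simp add: F_def)
    have IH: "real (card G') \<le> F" if "uniform_hypergraph k n G'" "\<not> contains_ordered_Kt_s k s n G'" for G'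
      using levels[OF s1 n1 k1 that] by (simp add: F_def)
    have "real (card H) \<le> real (s-1) * real n ^ k + (real n ^ (k*(s-1)) * real n ^ s * F) powr (1/real s)"
      by (rule step[OF s1 U[unfolded tk] NC[unfolded tk] IH F0])
    also have "\<dots> \<le> real (s-1) * real n ^ k + 2 * real n powr (real k + 1 - 1 / real s ^ k)"
      using arith_step[of "real n" s k] n1 s1 k1 by (simp add: F_def)
    finally have main: "real (card H) \<le> real (s-1) * x ^ k + 2 * x powr (real k + 1 - 1 / real s ^ k)"
      by (simp add: x_def)
    have goal_eq: "real n powr (real t - 1 / (real t * real s ^ (t - 1))) = x powr (real t - \<delta>)"
      by (simp add: x_def \<delta>_def)
    have trivial: "real (card H) \<le> x ^ t / 2"
    proof -
      have "H \<subseteq> {e. e \<subseteq> {1..n} \<and> card e = t}" using U unfolding uniform_hypergraph_def by blast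
      hence "card H \<le> card {e. e \<subseteq> {1..n} \<and> card e = t}" by (intro card_mono) auto
      also have "\<dots> = n choose t" using n_subsets[of "{1..n}" t] by simp
      finally have c: "real (card H) \<le> real (n choose t)" by simp
      have "fact 2 \<le> (fact t :: real)" using t2 by (rule fact_mono)
      hence f2: "2 \<le> (fact t :: real)" by simp
      have "2 * real (n choose t) \<le> fact t * real (n choose t)"
        by (rule mult_right_mono[OF f2]) simp
      also have "\<dots> \<le> real n ^ t" by (rule fact_choose_le)
      finally show ?thesis using c by (simp add: x_def)
    qed
    show ?thesis
    proof (cases "x powr \<delta> \<le> 4")
      case True
      have "x powr (real t - \<delta>) = x ^ t / x powr \<delta>" using xp by (simp add: powr_diff powr_realpow)
      moreover have "x ^ t / 4 \<le> x ^ t / x powr \<delta>"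
        using True xp by (intro divide_left_mono) auto
      ultimately have "x ^ t / 2 \<le> 2 * x powr (real t - \<delta>)" by (simp add: mult.commute)
      then show ?thesis using trivial goal_eq by simp
    next
      case False
      hence big: "x powr \<delta> > 4" by simp
      have A: "2 * x powr (real k + 1 - 1 / real s ^ k) \<le> x powr (real t - \<delta>)"
      proof -
        have e1: "real t - \<delta> = (real k + 1 - 1 / real s ^ k) + (1 / real s ^ k - \<delta>)" using tk by simp
        have "\<delta> \<le> 1 / real s ^ k - \<delta>"
        proof -
          have "2 * \<delta> \<le> real t * \<delta>" using t2 dpos by (intro mult_right_mono) auto
          thus ?thesis using td by simp
        qed
        hence "x powr \<delta> \<le> x powr (1 / real s ^ k - \<delta>)" using x1 by (intro powr_mono) auto
        hence "2 \<le> x powr (1 / real s ^ k - \<delta>)" using big by simp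
        hence "2 * x powr (real k + 1 - 1 / real s ^ k)
             \<le> x powr (1 / real s ^ k - \<delta>) * x powr (real k + 1 - 1 / real s ^ k)"
          by (intro mult_right_mono) auto
        also have "\<dots> = x powr ((real k + 1 - 1 / real s ^ k) + (1 / real s ^ k - \<delta>))"
          by (simp only: powr_add mult.commute)
        also have "\<dots> = x powr (real t - \<delta>)" by (simp only: e1)
        finally show ?thesis .
      qed
      have B: "real (s-1) * x ^ k \<le> x powr (real t - \<delta>)"
      proof -
        have e2: "x powr (real t - \<delta>) = x ^ k * x powr (1 - \<delta>)"
        proof -
          have "real t - \<delta> = real k + (1 - \<delta>)" using tk by simp
          hence "x powr (real t - \<delta>) = x powr (real k + (1 - \<delta>))" by (simp only:)
          hence "x powr (real t - \<delta>) = x powr real k * x powr (1 - \<delta>)" by (simp only: powr_add)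
          thus ?thesis using xp by (simp add: powr_realpow)
        qed
        have sk: "real s \<le> real s ^ k"
        proof -
          have "real s ^ 1 \<le> real s ^ k" using s1 k1 by (intro power_increasing) auto
          thus ?thesis by simp
        qed
        have "(real s + 1) * \<delta> \<le> 1"
        proof -
          have "real s + 1 \<le> real t * real s ^ k"
          proof -
            have "real s + 1 \<le> 2 * real s" using s1 by simp
            also have "\<dots> \<le> real t * real s ^ k" using t2 sk by (intro mult_mono) auto
            finally show ?thesis .
          qed
          thus ?thesis using t2 spos unfolding \<delta>_def tk1 by (simp add: field_simps)
        qed
        hence "real s * \<delta> \<le> 1 - \<delta>" by (simp add: algebra_simps)
        hence "x powr (real s * \<delta>) \<le> x powr (1 - \<delta>)" using x1 by (intro powr_mono) auto
        moreover have "x powr (real s * \<delta>) = (x powr \<delta>) ^ s"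
          using xp by (simp add: powr_realpow[symmetric] powr_powr mult.commute)
        moreover have "(4::real) ^ s \<le> (x powr \<delta>) ^ s" using big by (intro power_mono) auto
        moreover have "real (s-1) \<le> (4::real) ^ s"
        proof -
          have "2 * s \<le> 2 ^ s" using two_s_le[OF s1] .
          hence "real (2 * s) \<le> real (2 ^ s)" by (simp only: of_nat_le_iff)
          hence "2 * real s \<le> (2::real) ^ s" by simp
          moreover have "(2::real) ^ s \<le> 4 ^ s" by (intro power_mono) auto
          moreover have "real (s-1) = real s - 1" using s1 by (simp add: of_nat_diff)
          moreover have "real s \<ge> 0" by simp
          ultimately show ?thesis by linarith
        qed
        ultimately have "real (s-1) \<le> x powr (1 - \<delta>)" by linarith
        hence "real (s-1) * x ^ k \<le> x powr (1 - \<delta>) * x ^ k"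
          by (intro mult_right_mono) (use xp in auto)
        thus ?thesis using e2 by (simp add: mult.commute)
      qed
      show ?thesis using main A B goal_eq by simp
    qed
  qed
qed


end
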